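(* Let $k\in\mathbb N$, $\alpha,\beta\in\mathbb R$, $0<p,q\le\infty$, and $0<\delta\le1/(2k)$. Let $J_i=[k\delta i,k\delta(i+1/2)]$ and define \[ f_\delta(x)=\begin{cases}(-1)^i, & x\in J_i,\ 0\le i\le\lfloor1/(2k\delta)\rfloor,\\ 0,&\text{otherwise}.\end{cases} \] Then $\|w_{\alpha,\beta}f_\delta\|_p\sim1$ and $\Omega_\varphi^k(f_\delta,\delta)_{w_{\alpha,\beta},q}\ge c>0$, with constants independent of $\delta$.
   Context: For $x\in[-1,1]$, $\varphi(x)=\sqrt{1-x^2}$, $w_{\alpha,\beta}(x)=(1+x)^\alpha(1-x)^\beta$; $\|\cdot\|_p$ is the $L_p[-1,1]$ (quasi)norm, $\|g\|_{L_q(S)}$ the $L_q$ (quasi)norm over $S$. $\Delta_h^k(f,x)=\sum_{i=0}^k\binom ki(-1)^{k-i}f(x-kh/2+ih)$ if $x\pm kh/2\in[-1,1]$, else $0$. For a weight $w$, $\Omega_\varphi^k(f,\delta)_{w,q}=\sup_{0<h\le\delta}\|w(x)\Delta^k_{h\varphi(x)}(f,x)\|_{L_q[-1+2k^2h^2,1-2k^2h^2]}$. $F\sim G$ means $c_1F\le G\le c_2F$ with positive constants independent of $\delta$. *)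

theory Defs
  imports "HOL-Analysis.Analysis" "HOL-Probability.Essential_Supremum"
begin

definition phi :: "real \<Rightarrow> real" where
  "phi x = sqrt (1 - x\<^sup>2)"

definition wab :: "real \<Rightarrow> real \<Rightarrow> real \<Rightarrow> real" where
  "wab \<alpha> \<beta> x = (1 + x) powr \<alpha> * (1 - x) powr \<beta>"

definition Lnorm :: "real set \<Rightarrow> ennreal \<Rightarrow> (real \<Rightarrow> real) \<Rightarrow> ennreal" where
  "Lnorm S p g =
     (if p = \<infinity> then esssup (lebesgue_on S) (\<lambda>x. ennreal \<bar>g x\<bar>)
      else (let I = (\<integral>\<^sup>+ x \<in> S. ennreal (\<bar>g x\<bar> powr enn2real p) \<partial>lebesgue)
            in if I = \<infinity> then \<infinity> else ennreal (enn2real I powr (1 / enn2real p))))"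

definition kdiff :: "nat \<Rightarrow> real \<Rightarrow> (real \<Rightarrow> real) \<Rightarrow> real \<Rightarrow> real" where
  "kdiff k h f x =
     (if -1 \<le> x - real k * h / 2 \<and> x + real k * h / 2 \<le> 1
      then (\<Sum>i=0..k. real (k choose i) * (-1) ^ (k - i) * f (x - real k * h / 2 + real i * h))
      else 0)"

definition Omega_phi :: "nat \<Rightarrow> (real \<Rightarrow> real) \<Rightarrow> real \<Rightarrow> (real \<Rightarrow> real) \<Rightarrow> ennreal \<Rightarrow> ennreal" where
  "Omega_phi k f \<delta> w q =
     (SUP h\<in>{0<..\<delta>}. Lnorm {-1 + 2 * (real k)\<^sup>2 * h\<^sup>2 .. 1 - 2 * (real k)\<^sup>2 * h\<^sup>2} q
                         (\<lambda>x. w x * kdiff k (h * phi x) f x))"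

definition Jint :: "nat \<Rightarrow> real \<Rightarrow> nat \<Rightarrow> real set" where
  "Jint k \<delta> i = {real k * \<delta> * real i .. real k * \<delta> * (real i + 1/2)}"

definition fdelta :: "nat \<Rightarrow> real \<Rightarrow> real \<Rightarrow> real" where
  "fdelta k \<delta> x =
     (if \<exists>i. i \<le> nat \<lfloor>1 / (2 * real k * \<delta>)\<rfloor> \<and> x \<in> Jint k \<delta> i
      then (-1) ^ (SOME i. i \<le> nat \<lfloor>1 / (2 * real k * \<delta>)\<rfloor> \<and> x \<in> Jint k \<delta> i)
      else 0)"

end

theory Submission
  imports Defs
begin


definition Lc :: "ennreal \<Rightarrow> real \<Rightarrow> real \<Rightarrow> real" where
  "Lc p c0 m = (if p = \<infinity> then c0 else (c0 powr enn2real p * m) powr (1 / enn2real p))"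

lemma Lc_pos: "c0 > 0 \<Longrightarrow> m > 0 \<Longrightarrow> Lc p c0 m > 0"
  unfolding Lc_def by auto

lemma enn2real_pos: "0 < p \<Longrightarrow> p \<noteq> \<infinity> \<Longrightarrow> 0 < enn2real p"
  by (simp add: enn2real_positive_iff less_top)

lemma Lnorm_lower:
  fixes g :: "real \<Rightarrow> real"
  assumes p: "0 < p" and c0: "0 < c0" and m: "0 < m"
    and E: "E \<in> sets lebesgue" "E \<subseteq> S" and S: "S \<in> sets lebesgue"
    and mE: "ennreal m \<le> emeasure lebesgue E"
    and g: "\<And>x. x \<in> E \<Longrightarrow> c0 \<le> \<bar>g x\<bar>"
  shows "ennreal (Lc p c0 m) \<le> Lnorm S p g"
proof (cases "p = \<infinity>")
  case True
  show ?thesis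
  proof (rule ccontr)
    assume "\<not> ?thesis"
    then have lt: "esssup (lebesgue_on S) (\<lambda>x. ennreal \<bar>g x\<bar>) < ennreal c0"
      using True by (simp add: Lnorm_def Lc_def)
    have "AE x in lebesgue_on S. ennreal \<bar>g x\<bar> \<le> esssup (lebesgue_on S) (\<lambda>x. ennreal \<bar>g x\<bar>)"
      by (rule esssup_AE)
    then have "AE x in lebesgue_on S. x \<notin> E"
    proof (rule AE_mp, intro AE_I2 impI)
      fix x assume "ennreal \<bar>g x\<bar> \<le> esssup (lebesgue_on S) (\<lambda>x. ennreal \<bar>g x\<bar>)"
      with lt have "ennreal \<bar>g x\<bar> < ennreal c0" by simp
      then have "\<bar>g x\<bar> < c0" by (simp add: ennreal_less_iff)
      then show "x \<notin> E" using g by force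
    qed
    moreover have ES: "E \<in> sets (lebesgue_on S)"
      using E S by (simp add: sets_restrict_space_iff)
    ultimately have "emeasure (lebesgue_on S) E = 0"
      using E by (subst (asm) AE_iff_measurable[OF ES]) (auto simp: space_restrict_space)
    moreover have "emeasure (lebesgue_on S) E = emeasure lebesgue E"
      using E S by (intro emeasure_restrict_space) auto
    ultimately show False using mE m by (simp add: ennreal_le_iff2 ) 
  qed
next
  case False
  define p' where "p' = enn2real p"
  have p': "0 < p'" using p False enn2real_pos p'_def by blast
  define I where "I = (\<integral>\<^sup>+ x \<in> S. ennreal (\<bar>g x\<bar> powr p') \<partial>lebesgue)"
  have "(\<integral>\<^sup>+ x. ennreal (c0 powr p') * indicator E x \<partial>lebesgue) \<le> I"
    unfolding I_def
  proof (rule nn_integral_mono)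
    fix x
    show "ennreal (c0 powr p') * indicator E x \<le> ennreal (\<bar>g x\<bar> powr p') * indicator S x"
    proof (cases "x \<in> E")
      case True
      then have "c0 powr p' \<le> \<bar>g x\<bar> powr p'" using g c0 p' by (intro powr_mono2) auto
      then show ?thesis using True E by (auto simp: indicator_def)
    qed (simp)
  qed
  also have "(\<integral>\<^sup>+ x. ennreal (c0 powr p') * indicator E x \<partial>lebesgue) = ennreal (c0 powr p') * emeasure lebesgue E"
    using E by (simp add: nn_integral_cmult_indicator)
  finally have I1: "ennreal (c0 powr p') * emeasure lebesgue E \<le> I" .
  have I2: "ennreal (c0 powr p' * m) \<le> ennreal (c0 powr p') * emeasure lebesgue E"
  proof -
    have "ennreal (c0 powr p' * m) = ennreal (c0 powr p') * ennreal m"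
      using m by (simp add: ennreal_mult)
    also have "\<dots> \<le> ennreal (c0 powr p') * emeasure lebesgue E"
      using mE by (rule mult_left_mono) simp
    finally show ?thesis .
  qed
  show ?thesis
  proof (cases "I = \<infinity>")
    case True then show ?thesis using False by (simp add: Lnorm_def I_def p'_def)
  next
    case Inf: False
    have "c0 powr p' * m \<le> enn2real I"
    proof -
      have "enn2real (ennreal (c0 powr p' * m)) \<le> enn2real I"
        using I1 I2 Inf by (intro enn2real_mono) (auto simp: less_top)
      then show ?thesis using c0 m by simp
    qed
    then have "(c0 powr p' * m) powr (1/p') \<le> enn2real I powr (1/p')"
      using c0 m p' by (intro powr_mono2) auto
    then show ?thesis using False Inf
      by (simp add: Lnorm_def I_def[symmetric] p'_def[symmetric] Lc_def Let_def)
  qed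
qed

definition Uc :: "ennreal \<Rightarrow> real \<Rightarrow> real" where
  "Uc p C = (if p = \<infinity> then C else (C powr enn2real p * 2) powr (1 / enn2real p))"

lemma Lnorm_upper:
  fixes g :: "real \<Rightarrow> real"
  assumes p: "0 < p" and C: "0 \<le> C" and gm: "g \<in> borel_measurable lebesgue"
    and g: "\<And>x. \<bar>g x\<bar> \<le> C"
  shows "Lnorm {-1..1} p g \<le> ennreal (Uc p C)"
proof (cases "p = \<infinity>")
  case True
  have "(\<lambda>x. ennreal \<bar>g x\<bar>) \<in> borel_measurable (lebesgue_on {-1..1})"
    using gm by (intro measurable_restrict_space1) measurable
  then have "esssup (lebesgue_on {-1..1}) (\<lambda>x. ennreal \<bar>g x\<bar>) \<le> ennreal C"
    by (rule esssup_I) (auto intro!: AE_I2 ennreal_leI simp: g)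
  then show ?thesis using True by (simp add: Lnorm_def Uc_def)
next
  case False
  define p' where "p' = enn2real p"
  have p': "0 < p'" using p False enn2real_pos p'_def by blast
  define I where "I = (\<integral>\<^sup>+ x \<in> {-1..1}. ennreal (\<bar>g x\<bar> powr p') \<partial>lebesgue)"
  have pw: "ennreal (\<bar>g x\<bar> powr p') * indicator {-1..1} x \<le> ennreal (C powr p') * indicator {-1..1} x" for x
  proof -
    have "\<bar>g x\<bar> powr p' \<le> C powr p'" using g p' by (intro powr_mono2) auto
    then show ?thesis by (auto simp: indicator_def)
  qed
  have "I \<le> (\<integral>\<^sup>+ x. ennreal (C powr p') * indicator {-1..1::real} x \<partial>lebesgue)"
    unfolding I_def using pw by (simp add: nn_integral_mono)
  also have "\<dots> = ennreal (C powr p' * 2)"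
    by (simp add: nn_integral_cmult_indicator ennreal_mult)
  finally have I1: "I \<le> ennreal (C powr p' * 2)" .
  then have Inf: "I \<noteq> \<infinity>" by (auto simp: top_unique)
  have "enn2real I \<le> enn2real (ennreal (C powr p' * 2))" using I1
    by (intro enn2real_mono) auto
  then have "enn2real I \<le> C powr p' * 2" by simp
  then have "enn2real I powr (1/p') \<le> (C powr p' * 2) powr (1/p')"
    using p' by (intro powr_mono2) auto
  then show ?thesis using False Inf
    by (simp add: Lnorm_def I_def[symmetric] p'_def[symmetric] Uc_def Let_def)
qed



lemma neg1_pow_diff: "j \<le> k \<Longrightarrow> (-1::real)^(k-j) = (-1)^k * (-1)^j"
proof -
  assume "j \<le> k"
  then have "(-1::real)^k = (-1)^(k-j) * (-1)^j" by (metis le_add_diff_inverse2 power_add)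
  then have "(-1::real)^k * (-1)^j = (-1)^(k-j) * ((-1)^j * (-1)^j)" by simp
  also have "(-1::real)^j * (-1)^j = 1" by (metis power_add power_minus1_even mult_2[symmetric] )
  finally show ?thesis by simp
qed

lemma alt_full: "1 \<le> k \<Longrightarrow> (\<Sum>j\<le>k. real (k choose j) * (-1)^(k-j)) = 0"
proof -
  assume k: "1 \<le> k"
  have "(\<Sum>j\<le>k. real (k choose j) * (-1)^(k-j)) = (-1)^k * (\<Sum>j\<le>k. (-1)^j * real (k choose j))"
    by (simp add: sum_distrib_left neg1_pow_diff mult_ac)
  also have "\<dots> = 0" using k by (simp add: choose_alternating_sum)
  finally show ?thesis .
qed

lemma alt_head: "1 \<le> m \<Longrightarrow> m \<le> k \<Longrightarrow> 1 \<le> \<bar>\<Sum>j<m. real (k choose j) * (-1)^(k-j)\<bar>"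
proof -
  assume m: "1 \<le> m" "m \<le> k"
  have eq: "{..<m} = {..m-1}" using m by auto
  have "(\<Sum>j<m. real (k choose j) * (-1)^(k-j)) = (-1)^k * (\<Sum>j\<le>m-1. (real k gchoose j) * (-1)^j)"
    unfolding eq using m by (auto simp: sum_distrib_left neg1_pow_diff mult_ac binomial_gbinomial intro!: sum.cong)
  also have "\<dots> = (-1)^k * ((-1)^(m-1) * ((real k - 1) gchoose (m-1)))"
    by (simp add: gbinomial_sum_lower_neg)
  also have "(real k - 1) gchoose (m-1) = real ((k-1) choose (m-1))"
    using m by (simp add: binomial_gbinomial of_nat_diff)
  finally have "\<bar>\<Sum>j<m. real (k choose j) * (-1)^(k-j)\<bar> = real ((k-1) choose (m-1))"
    by (simp add: abs_mult power_abs)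
  moreover have "(k-1) choose (m-1) \<ge> 1" using m by (simp add: Suc_leI zero_less_binomial)
  ultimately show ?thesis by simp
qed
lemma kdiff_jump:
  fixes f :: "real \<Rightarrow> real"
  assumes k: "1 \<le> k" and t: "0 < t"
    and lo: "x - real k * t / 2 < a" and hi: "a \<le> x + real k * t / 2"
    and dom: "-1 \<le> x - real k * t / 2" "x + real k * t / 2 \<le> 1"
    and fs: "\<And>y. a \<le> y \<Longrightarrow> y \<le> x + real k * t / 2 \<Longrightarrow> f y = s"
    and f0: "\<And>y. x - real k * t / 2 \<le> y \<Longrightarrow> y < a \<Longrightarrow> f y = 0"
    and s: "\<bar>s\<bar> = 1"
  shows "1 \<le> \<bar>kdiff k t f x\<bar>"
proof -
  define y where "y j = x - real k * t / 2 + real j * t" for j :: nat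
  have yr: "x - real k * t / 2 \<le> y j \<and> y j \<le> x + real k * t / 2" if "j \<le> k" for j
  proof -
    have "real j * t \<le> real k * t" using that t by (intro mult_right_mono) auto
    then show ?thesis using t unfolding y_def by auto
  qed
  have ymono: "y i \<le> y j" if "i \<le> j" for i j
  proof -
    have "real i * t \<le> real j * t" using that t by (intro mult_right_mono) auto
    then show ?thesis unfolding y_def by auto
  qed
  define m where "m = (LEAST j. a \<le> y j)"
  have yk: "a \<le> y k" using hi unfolding y_def by (simp add: algebra_simps)
  have am: "a \<le> y m" unfolding m_def by (rule LeastI[of _ k]) (rule yk)
  have mk: "m \<le> k" unfolding m_def by (rule Least_le) (rule yk)
  have m1: "1 \<le> m"
  proof (rule ccontr)
    assume "\<not> 1 \<le> m" then have "m = 0" by simp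
    with am lo show False unfolding y_def by simp
  qed
  have lt: "y j < a" if "j < m" for j
    using not_less_Least[of j "\<lambda>j. a \<le> y j"] that unfolding m_def by simp
  have fy: "f (y j) = (if m \<le> j then s else 0)" if "j \<le> k" for j
  proof (cases "m \<le> j")
    case True
    then have "a \<le> y j" using am ymono by (meson order_trans)
    then show ?thesis using True fs yr[OF that] by simp
  next
    case False
    then show ?thesis using f0 yr[OF that] lt by simp
  qed
  define c where "c j = real (k choose j) * (-1)^(k-j)" for j
  have "kdiff k t f x = (\<Sum>j=0..k. c j * f (y j))"
    using dom unfolding kdiff_def c_def y_def by simp
  also have "\<dots> = (\<Sum>j=0..k. s * c j - (if j < m then s * c j else 0))"
    using fy by (intro sum.cong) auto
  also have "\<dots> = s * (\<Sum>j=0..k. c j) - (\<Sum>j=0..k. if j < m then s * c j else 0)"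
    by (simp add: sum_subtractf sum_distrib_left)
  also have "(\<Sum>j=0..k. c j) = 0" using alt_full[OF k] unfolding c_def by (simp add: atLeast0AtMost)
  also have "(\<Sum>j=0..k. if j < m then s * c j else 0) = (\<Sum>j\<in>{0..k} \<inter> {..<m}. s * c j)"
    by (simp add: sum.inter_restrict)
  also have "{0..k} \<inter> {..<m} = {..<m}" using mk by auto
  finally have "kdiff k t f x = - (s * (\<Sum>j<m. c j))" by (simp add: sum_distrib_left)
  then have "\<bar>kdiff k t f x\<bar> = \<bar>\<Sum>j<m. c j\<bar>" using s by (simp add: abs_mult)
  then show ?thesis using alt_head[OF m1 mk] unfolding c_def by simp
qed

lemma J_disj:
  assumes kd: "0 < real k * \<delta>" and x: "x \<in> Jint k \<delta> i" "x \<in> Jint k \<delta> j"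
  shows "i = j"
proof (rule ccontr)
  assume "i \<noteq> j"
  then consider "i < j" | "j < i" by linarith
  then show False
  proof cases
    case 1
    then have "real i + 1/2 < real j" by linarith
    then have "real k * \<delta> * (real i + 1/2) < real k * \<delta> * real j"
      using kd by (intro mult_strict_left_mono) auto
    then show False using x unfolding Jint_def by auto
  next
    case 2
    then have "real j + 1/2 < real i" by linarith
    then have "real k * \<delta> * (real j + 1/2) < real k * \<delta> * real i"
      using kd by (intro mult_strict_left_mono) auto
    then show False using x unfolding Jint_def by auto
  qed
qed

lemma f_on_J:
  assumes kd: "0 < real k * \<delta>" and i: "i \<le> nat \<lfloor>1 / (2 * real k * \<delta>)\<rfloor>" and x: "x \<in> Jint k \<delta> i"
  shows "fdelta k \<delta> x = (-1)^i"
proof -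
  let ?P = "\<lambda>i. i \<le> nat \<lfloor>1 / (2 * real k * \<delta>)\<rfloor> \<and> x \<in> Jint k \<delta> i"
  have ex: "\<exists>i. ?P i" using i x by blast
  have "?P (SOME i. ?P i)" by (rule someI) (use i x in blast)
  then have "(SOME i. ?P i) = i" using J_disj[OF kd] x by blast
  then show ?thesis using ex unfolding fdelta_def by simp
qed

lemma f_off:
  assumes "\<And>i. i \<le> nat \<lfloor>1 / (2 * real k * \<delta>)\<rfloor> \<Longrightarrow> x \<notin> Jint k \<delta> i"
  shows "fdelta k \<delta> x = 0"
  using assms unfolding fdelta_def by auto

lemma f_sum:
  assumes kd: "0 < real k * \<delta>"
  shows "fdelta k \<delta> = (\<lambda>x. \<Sum>i\<le>nat \<lfloor>1 / (2 * real k * \<delta>)\<rfloor>. (-1)^i * indicator (Jint k \<delta> i) x)"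
proof
  fix x
  let ?N = "nat \<lfloor>1 / (2 * real k * \<delta>)\<rfloor>"
  show "fdelta k \<delta> x = (\<Sum>i\<le>?N. (-1)^i * indicator (Jint k \<delta> i) x)"
  proof (cases "\<exists>i\<le>?N. x \<in> Jint k \<delta> i")
    case True
    then obtain i where i: "i \<le> ?N" "x \<in> Jint k \<delta> i" by blast
    have z: "(-1)^j * indicator (Jint k \<delta> j) x = (0::real)" if "j \<in> {..?N} - {i}" for j
    proof -
      have "x \<notin> Jint k \<delta> j" using that J_disj[OF kd i(2), of j] by blast
      then show ?thesis by simp
    qed
    have "(\<Sum>j\<le>?N. (-1)^j * indicator (Jint k \<delta> j) x) = (\<Sum>j\<in>{i}. (-1)^j * indicator (Jint k \<delta> j) x :: real)"
      by (rule sum.mono_neutral_right) (use i z in auto)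
    also have "\<dots> = (-1)^i" using i(2) by simp
    finally show ?thesis using f_on_J[OF kd i] by simp
  next
    case False
    then show ?thesis using f_off[of k \<delta> x] by (auto simp: indicator_def)
  qed
qed

lemma powr_bounds:
  fixes y a :: real
  assumes "1/4 \<le> y" "y \<le> 2"
  shows "exp (-2 * \<bar>a\<bar>) \<le> y powr a \<and> y powr a \<le> exp (2 * \<bar>a\<bar>)"
proof -
  have "ln y \<le> ln 2" using assms by simp
  also have "ln (2::real) < 1" by (rule ln_2_less_1)
  finally have l1: "ln y \<le> 2" by simp
  have "ln (1/4::real) \<le> ln y" using assms by simp
  moreover have "ln (1/4::real) = - 2 * ln 2"
  proof -
    have "ln (4::real) = ln (2^2)" by simp
    also have "\<dots> = 2 * ln 2" by (subst ln_realpow) auto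
    finally show ?thesis by (simp add: ln_div)
  qed
  ultimately have l2: "-2 \<le> ln y" using ln_2_less_1 by linarith
  have "\<bar>ln y\<bar> \<le> 2" using l1 l2 by linarith
  then have "\<bar>a\<bar> * \<bar>ln y\<bar> \<le> \<bar>a\<bar> * 2" by (rule mult_left_mono) simp
  then have al: "\<bar>a * ln y\<bar> \<le> 2 * \<bar>a\<bar>" by (simp add: abs_mult)
  have yp: "y powr a = exp (a * ln y)" using assms by (simp add: powr_def)
  have "-2 * \<bar>a\<bar> \<le> a * ln y" "a * ln y \<le> 2 * \<bar>a\<bar>" using al by linarith+
  then show ?thesis unfolding yp by simp
qed

lemma wab_bounds:
  assumes "0 \<le> x" "x \<le> 3/4"
  shows "exp (-2 * (\<bar>a\<bar> + \<bar>b\<bar>)) \<le> wab a b x \<and> wab a b x \<le> exp (2 * (\<bar>a\<bar> + \<bar>b\<bar>))"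
proof -
  have A: "exp (-2 * \<bar>a\<bar>) \<le> (1+x) powr a \<and> (1+x) powr a \<le> exp (2 * \<bar>a\<bar>)"
    using assms by (intro powr_bounds) auto
  have B: "exp (-2 * \<bar>b\<bar>) \<le> (1-x) powr b \<and> (1-x) powr b \<le> exp (2 * \<bar>b\<bar>)"
    using assms by (intro powr_bounds) auto
  have "exp (-2 * (\<bar>a\<bar> + \<bar>b\<bar>)) = exp (-2 * \<bar>a\<bar>) * exp (-2 * \<bar>b\<bar>)" by (simp add: exp_add[symmetric] algebra_simps)
  also have "\<dots> \<le> (1+x) powr a * (1-x) powr b" using A B by (intro mult_mono) auto
  finally have 1: "exp (-2 * (\<bar>a\<bar> + \<bar>b\<bar>)) \<le> wab a b x" unfolding wab_def .
  have "(1+x) powr a * (1-x) powr b \<le> exp (2 * \<bar>a\<bar>) * exp (2 * \<bar>b\<bar>)" using A B by (intro mult_mono) auto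
  also have "\<dots> = exp (2 * (\<bar>a\<bar> + \<bar>b\<bar>))" by (simp add: exp_add[symmetric] algebra_simps)
  finally show ?thesis using 1 unfolding wab_def by simp
qed

lemma phi_bounds:
  assumes "0 \<le> x" "x \<le> 9/16"
  shows "1/2 < phi x \<and> phi x \<le> 1"
proof -
  have "x\<^sup>2 \<le> (9/16)\<^sup>2" using assms by (intro power_mono) auto
  then have "1/4 < 1 - x\<^sup>2" by (simp add: power2_eq_square)
  then have "sqrt (1/4) < sqrt (1 - x\<^sup>2)" by (simp only: real_sqrt_less_iff)
  moreover have "sqrt (1/4::real) = 1/2" by (simp add: real_sqrt_divide)
  moreover have "sqrt (1 - x\<^sup>2) \<le> 1" by simp
  ultimately show ?thesis unfolding phi_def by simp
qed

theorem lemma6p1: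
  fixes k :: nat and \<alpha> \<beta> :: real and p q :: ennreal
  assumes "k \<ge> 1" and "0 < p" and "0 < q"
  shows "\<exists>c1 c2 c :: real. 0 < c1 \<and> 0 < c2 \<and> 0 < c \<and>
           (\<forall>\<delta>::real. 0 < \<delta> \<and> \<delta> \<le> 1 / (2 * real k) \<longrightarrow>
              ennreal c1 \<le> Lnorm {-1..1} p (\<lambda>x. wab \<alpha> \<beta> x * fdelta k \<delta> x)
            \<and> Lnorm {-1..1} p (\<lambda>x. wab \<alpha> \<beta> x * fdelta k \<delta> x) \<le> ennreal c2
            \<and> ennreal c \<le> Omega_phi k (fdelta k \<delta>) \<delta> (wab \<alpha> \<beta>) q)"
proof -
  note k = assms(1) and p = assms(2) and q = assms(3)
  define w0 where "w0 = exp (-2 * (\<bar>\<alpha>\<bar> + \<bar>\<beta>\<bar>))"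
  define W where "W = exp (2 * (\<bar>\<alpha>\<bar> + \<bar>\<beta>\<bar>))"
  have w0: "0 < w0" and W: "0 < W" by (auto simp: w0_def W_def)
  have wb: "w0 \<le> wab \<alpha> \<beta> x \<and> wab \<alpha> \<beta> x \<le> W" if "0 \<le> x" "x \<le> 3/4" for x
    using wab_bounds[OF that] unfolding w0_def W_def by blast
  have wnn: "0 \<le> wab \<alpha> \<beta> x" for x by (simp add: wab_def)
  have m16: "(0::real) < 1/16" by simp
  show ?thesis
  proof (intro exI conjI allI impI)
    show "0 < Lc p w0 (1/16)" using w0 by (auto intro: Lc_pos)
    show "0 < Uc p W" using W by (simp add: Uc_def)
    show "0 < Lc q w0 (1/16)" using w0 by (auto intro: Lc_pos)
    fix \<delta> :: real
    assume d: "0 < \<delta> \<and> \<delta> \<le> 1 / (2 * real k)"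
    define K where "K = real k * \<delta>"
    have K0: "0 < K" using d k unfolding K_def by simp
    have K1: "K \<le> 1/2"
    proof -
      have "real k * \<delta> \<le> real k * (1 / (2 * real k))" using d by (intro mult_left_mono) auto
      then show ?thesis using k unfolding K_def by simp
    qed
    have Jeq: "Jint k \<delta> i = {K * real i .. K * (real i + 1/2)}" for i
      unfolding Jint_def K_def by simp
    define N where "N = nat \<lfloor>1 / (2 * real k * \<delta>)\<rfloor>"
    have r: "1 / (2 * real k * \<delta>) = 1 / (2 * K)" unfolding K_def by (simp add: mult_ac)
    have Kr: "K * (1 / (2 * K)) = 1/2" using K0 by simp
    have Nr: "real N = of_int \<lfloor>1 / (2 * K)\<rfloor>"
    proof -
      have "0 \<le> \<lfloor>1 / (2 * K)\<rfloor>" using K0 by simp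
      then show ?thesis unfolding N_def r by simp
    qed
    have NK1: "K * real N \<le> 1/2"
    proof -
      have "real N \<le> 1 / (2 * K)" unfolding Nr by (rule of_int_floor_le)
      then have "K * real N \<le> K * (1 / (2 * K))" using K0 by (intro mult_left_mono) auto
      then show ?thesis using Kr by simp
    qed
    have NK2: "1/2 < K * (real N + 1)"
    proof -
      have "1 / (2 * K) < real N + 1" unfolding Nr by (rule floor_correct[THEN conjunct2, unfolded of_int_add of_int_1])
      then have "K * (1 / (2 * K)) < K * (real N + 1)" using K0 by (intro mult_strict_left_mono) auto
      then show ?thesis using Kr by simp
    qed
    have fJ: "fdelta k \<delta> y = (-1)^i" if "i \<le> N" "K * real i \<le> y" "y \<le> K * (real i + 1/2)" for i y
      using f_on_J[of k \<delta> i y] that K0 unfolding N_def K_def Jint_def by simp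
    have fsupp: "\<bar>fdelta k \<delta> y\<bar> = 1 \<and> 0 \<le> y \<and> y \<le> 3/4 \<or> fdelta k \<delta> y = 0" for y
    proof (cases "\<exists>i\<le>N. y \<in> Jint k \<delta> i")
      case True
      then obtain i where i: "i \<le> N" "K * real i \<le> y" "y \<le> K * (real i + 1/2)" by (auto simp: Jeq)
      have "0 \<le> K * real i" using K0 by simp
      moreover have "K * (real i + 1/2) \<le> K * (real N + 1/2)" using i K0 by (intro mult_left_mono) auto
      moreover have "K * (real N + 1/2) = K * real N + K/2" by (simp add: algebra_simps)
      ultimately have "0 \<le> y \<and> y \<le> 3/4" using i NK1 K1 by linarith
      then show ?thesis using fJ[OF i] by simp
    next
      case False
      then show ?thesis using f_off[of k \<delta> y] unfolding N_def by auto
    qed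
    define E where "E i = {K * real i .. K * real i + K/8}" for i :: nat
    define EE where "EE = (\<Union>i\<in>{..N}. E i)"
    have EEs: "EE \<in> sets lebesgue" unfolding EE_def E_def by auto
    have Ebd: "\<exists>i\<le>N. K * real i \<le> x \<and> x \<le> K * real i + K/8 \<and> 0 \<le> x \<and> x \<le> 9/16" if xE: "x \<in> EE" for x
    proof -
      obtain i where i: "i \<le> N" "K * real i \<le> x" "x \<le> K * real i + K/8"
        using xE unfolding EE_def E_def by auto
      have "K * real i \<le> K * real N" using i K0 by (intro mult_left_mono) auto
      moreover have "0 \<le> K * real i" using K0 by simp
      ultimately have "0 \<le> x \<and> x \<le> 9/16" using i NK1 K1 by linarith
      then show ?thesis using i by blast
    qed
    have EEm: "ennreal (1/16) \<le> emeasure lebesgue EE"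
    proof -
      have disj: "disjoint_family_on E {..N}"
        unfolding disjoint_family_on_def
      proof (intro ballI impI)
        fix i j :: nat assume "i \<noteq> j"
        show "E i \<inter> E j = {}"
        proof (rule ccontr)
          assume "E i \<inter> E j \<noteq> {}"
          then obtain x where x: "x \<in> E i" "x \<in> E j" by blast
          have "x \<in> Jint k \<delta> i" "x \<in> Jint k \<delta> j" using x K0 unfolding E_def Jeq by (auto simp: algebra_simps)
          then show False using J_disj[of k \<delta> x i j] K0 \<open>i \<noteq> j\<close> unfolding K_def by simp
        qed
      qed
      have "emeasure lebesgue EE = (\<Sum>i\<le>N. emeasure lebesgue (E i))"
        unfolding EE_def
      proof (rule sum_emeasure[symmetric])
        show "E ` {..N} \<subseteq> sets lebesgue" by (auto simp: E_def)
      qed (use disj in auto)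
      also have "\<dots> = (\<Sum>i\<le>N. ennreal (K/8))" using K0 by (intro sum.cong) (auto simp: E_def)
      also have "\<dots> = ennreal (\<Sum>i\<le>N. K/8)" using K0 by (subst sum_ennreal) auto
      also have "(\<Sum>i\<le>N. K/8) = (real N + 1) * (K/8)" by simp
      finally have "emeasure lebesgue EE = ennreal ((real N + 1) * (K/8))" .
      moreover have "1/16 \<le> (real N + 1) * (K/8)" using NK2 by (simp add: algebra_simps)
      ultimately show ?thesis by (simp add: ennreal_leI)
    qed
    show "ennreal (Lc p w0 (1/16)) \<le> Lnorm {-1..1} p (\<lambda>x. wab \<alpha> \<beta> x * fdelta k \<delta> x)"
    proof (rule Lnorm_lower[OF p w0 m16 EEs _ _ EEm])
      show "EE \<subseteq> {-1..1}" using Ebd by fastforce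
      show "{-1..1::real} \<in> sets lebesgue" by simp
      fix x assume "x \<in> EE"
      then obtain i where i: "i \<le> N" "K * real i \<le> x" "x \<le> K * real i + K/8" "0 \<le> x" "x \<le> 9/16"
        using Ebd by blast
      have "fdelta k \<delta> x = (-1)^i" using i K0 by (intro fJ) (auto simp: algebra_simps)
      then show "w0 \<le> \<bar>wab \<alpha> \<beta> x * fdelta k \<delta> x\<bar>" using wb[of x] i wnn[of x] by (simp add: abs_mult)
    qed
    show "Lnorm {-1..1} p (\<lambda>x. wab \<alpha> \<beta> x * fdelta k \<delta> x) \<le> ennreal (Uc p W)"
    proof (rule Lnorm_upper[OF p])
      show "0 \<le> W" using W by simp
    next
      have "(\<lambda>x. wab \<alpha> \<beta> x * (\<Sum>i\<le>N. (-1)^i * indicator (Jint k \<delta> i) x)) \<in> borel_measurable borel"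
        unfolding wab_def Jint_def by measurable
      then show "(\<lambda>x. wab \<alpha> \<beta> x * fdelta k \<delta> x) \<in> borel_measurable lebesgue"
        using f_sum[of k \<delta>] K0 unfolding K_def N_def by (simp add: measurable_completion)
    next
      fix x
      show "\<bar>wab \<alpha> \<beta> x * fdelta k \<delta> x\<bar> \<le> W"
        using fsupp[of x] wb[of x] wnn[of x] W by (auto simp: abs_mult)
    qed
    define h where "h = \<delta> / 2"
    have hin: "h \<in> {0<..\<delta>}" using d unfolding h_def by auto
    have kh: "real k * h = K/2" unfolding h_def K_def by simp
    have Sh: "2 * (real k)\<^sup>2 * h\<^sup>2 \<le> 1/8"
    proof -
      have "2 * (real k)\<^sup>2 * h\<^sup>2 = 2 * (K/2)\<^sup>2" by (simp add: power_mult_distrib[symmetric] kh)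
      also have "(K/2)\<^sup>2 \<le> (1/4)\<^sup>2" using K0 K1 by (intro power_mono) auto
      finally show ?thesis by (simp add: power2_eq_square)
    qed
    have "ennreal (Lc q w0 (1/16)) \<le> Lnorm {-1 + 2 * (real k)\<^sup>2 * h\<^sup>2 .. 1 - 2 * (real k)\<^sup>2 * h\<^sup>2} q
                         (\<lambda>x. wab \<alpha> \<beta> x * kdiff k (h * phi x) (fdelta k \<delta>) x)"
    proof (rule Lnorm_lower[OF q w0 m16 EEs _ _ EEm])
      show "EE \<subseteq> {-1 + 2 * (real k)\<^sup>2 * h\<^sup>2 .. 1 - 2 * (real k)\<^sup>2 * h\<^sup>2}" using Ebd Sh by fastforce
      show "{-1 + 2 * (real k)\<^sup>2 * h\<^sup>2 .. 1 - 2 * (real k)\<^sup>2 * h\<^sup>2} \<in> sets lebesgue" by simp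
      fix x assume "x \<in> EE"
      then obtain i where i: "i \<le> N" "K * real i \<le> x" "x \<le> K * real i + K/8" "0 \<le> x" "x \<le> 9/16"
        using Ebd by blast
      define t where "t = h * phi x"
      have ph: "1/2 < phi x \<and> phi x \<le> 1" using phi_bounds i by simp
      have t0: "0 < t" using ph d unfolding t_def h_def by simp
      have t1: "real k * t \<le> K/2"
      proof -
        have "real k * t = (real k * h) * phi x" unfolding t_def by simp
        also have "\<dots> \<le> (real k * h) * 1" using ph kh K0 by (intro mult_left_mono) auto
        finally show ?thesis using kh by simp
      qed
      have t2: "K/4 < real k * t"
      proof -
        have "(real k * h) * (1/2) < (real k * h) * phi x" using ph kh K0 by (intro mult_strict_left_mono) auto
        then show ?thesis using kh unfolding t_def by (simp add: mult_ac)
      qed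
      have kd: "1 \<le> \<bar>kdiff k t (fdelta k \<delta>) x\<bar>"
      proof (rule kdiff_jump[OF k t0, where a = "K * real i" and s = "(-1)^i"])
        show "x - real k * t / 2 < K * real i" using i t2 by simp
        have "0 < real k * t" using t0 k by simp
        then show "K * real i \<le> x + real k * t / 2" using i by linarith
        show "-1 \<le> x - real k * t / 2" "x + real k * t / 2 \<le> 1" using i t1 K1 by auto
        show "\<bar>(-1::real)^i\<bar> = 1" by simp
        fix y
        assume y: "K * real i \<le> y" "y \<le> x + real k * t / 2"
        show "fdelta k \<delta> y = (-1)^i"
          using y i t1 K0 by (intro fJ) (auto simp: algebra_simps)
      next
        fix y
        assume y: "x - real k * t / 2 \<le> y" "y < K * real i"
        show "fdelta k \<delta> y = 0"
        proof (rule f_off)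
          fix j assume "j \<le> nat \<lfloor>1 / (2 * real k * \<delta>)\<rfloor>"
          show "y \<notin> Jint k \<delta> j"
          proof (cases "i \<le> j")
            case True
            then have "K * real i \<le> K * real j" using K0 by (intro mult_left_mono) auto
            then show ?thesis using y unfolding Jeq by auto
          next
            case False
            then have "real j + 1/2 \<le> real i - 1/2" by linarith
            then have "K * (real j + 1/2) \<le> K * (real i - 1/2)" using K0 by (intro mult_left_mono) auto
            then show ?thesis using y i t1 unfolding Jeq by (auto simp: algebra_simps)
          qed
        qed
      qed
      have "w0 \<le> wab \<alpha> \<beta> x" using wb[of x] i by simp
      also have "\<dots> \<le> wab \<alpha> \<beta> x * \<bar>kdiff k t (fdelta k \<delta>) x\<bar>"
        using kd wnn[of x] by (simp add: mult_le_cancel_left1)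
      finally show "w0 \<le> \<bar>wab \<alpha> \<beta> x * kdiff k (h * phi x) (fdelta k \<delta>) x\<bar>"
        using wnn[of x] unfolding t_def by (simp add: abs_mult)
    qed
    also have "\<dots> \<le> Omega_phi k (fdelta k \<delta>) \<delta> (wab \<alpha> \<beta>) q"
      unfolding Omega_phi_def by (rule SUP_upper[OF hin])
    finally show "ennreal (Lc q w0 (1/16)) \<le> Omega_phi k (fdelta k \<delta>) \<delta> (wab \<alpha> \<beta>) q" .
  qed
qed

end
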